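(* Let $2n$ nodes be placed independently and uniformly at random in a rectangle of dimensions $2\sqrt{A}\times\sqrt{A}$, and let $c$ be a constant independent of $n$ and $A$ with $0<c<1/(7\sqrt{e})$. Then, with probability tending to $1$ as $n\to\infty$, there exists a cut with the following properties: (i) the cut is a curve running from the top side to the bottom side of the rectangle, separating it into a left part and a right part; it need not be a straight line; (ii) it lies within a vertical slab of width $L = c\sqrt{A/n}\,\log n$ located in the middle of the rectangle; (iii) no node lies at distance smaller than $\frac{c}{2}\sqrt{A/n}$ from the cut, on either side. *)

theory Defs
  imports "HOL-Probability.Probability"
begin

text \<open>Top side: y = sqrt A; bottom side: y = 0;
  left side: x = 0; right side: x = 2 sqrt A.\<close>
definition rect :: "real \<Rightarrow> (real \<times> real) set" where
  "rect A = cbox (0, 0) (2 * sqrt A, sqrt A)"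

definition node_space :: "real \<Rightarrow> nat \<Rightarrow> (nat \<Rightarrow> real \<times> real) measure" where
  "node_space A n = PiM {..<2 * n} (\<lambda>_. uniform_measure lborel (rect A))"

definition is_cut :: "real \<Rightarrow> (real \<Rightarrow> real \<times> real) \<Rightarrow> bool" where
  "is_cut A \<gamma> \<longleftrightarrow>
     path \<gamma> \<and> path_image \<gamma> \<subseteq> rect A \<and>
     snd (pathstart \<gamma>) = sqrt A \<and> snd (pathfinish \<gamma>) = 0 \<and>
     (\<forall>g. path g \<and> path_image g \<subseteq> rect A \<and> fst (pathstart g) = 0 \<and>
          fst (pathfinish g) = 2 * sqrt A \<longrightarrow> path_image g \<inter> path_image \<gamma> \<noteq> {})"

definition mid_slab :: "real \<Rightarrow> real \<Rightarrow> (real \<times> real) set" where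
  "mid_slab A L = {p. \<bar>fst p - sqrt A\<bar> \<le> L / 2}"

definition good_config :: "real \<Rightarrow> real \<Rightarrow> nat \<Rightarrow> (nat \<Rightarrow> real \<times> real) \<Rightarrow> bool" where
  "good_config A c n \<omega> \<longleftrightarrow>
     (\<exists>\<gamma>. is_cut A \<gamma> \<and>
          path_image \<gamma> \<subseteq> mid_slab A (c * sqrt (A / n) * ln n) \<and>
          (\<forall>i<2 * n. infdist (\<omega> i) (path_image \<gamma>) \<ge> c / 2 * sqrt (A / n)))"

end

theory Submission
  imports Defs
begin

definition pv :: "real \<times> real \<Rightarrow> real^2" where
  "pv p = (\<chi> i. if i = 1 then fst p else snd p)"

lemma pv_1 [simp]: "pv p $ 1 = fst p" and pv_2 [simp]: "pv p $ 2 = snd p"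
  by (auto simp: pv_def)

lemma pv_inj: "pv p = pv q \<Longrightarrow> p = q"
  by (metis pv_1 pv_2 prod_eq_iff)

lemma continuous_pv: "continuous_on S pv"
  unfolding pv_def
  apply (intro continuous_on_vec_lambda)
  subgoal for i by (cases "i = 1") (simp_all add: continuous_on_fst continuous_on_snd continuous_on_id)
  done

lemma mem_cbox_pv:
  "pv p \<in> cbox (pv (0,0)) (pv (w,h)) \<longleftrightarrow> 0 \<le> fst p \<and> fst p \<le> w \<and> 0 \<le> snd p \<and> snd p \<le> h"
  by (auto simp: mem_box_cart forall_2)

lemma fashoda_pair:
  fixes g \<gamma> :: "real \<Rightarrow> real \<times> real"
  assumes "path g" "path \<gamma>"
    and gi: "path_image g \<subseteq> cbox (0,0) (w,h)" and gam: "path_image \<gamma> \<subseteq> cbox (0,0) (w,h)"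
    and "fst (pathstart g) = 0" "fst (pathfinish g) = w"
    and "snd (pathstart \<gamma>) = h" "snd (pathfinish \<gamma>) = 0"
  shows "path_image g \<inter> path_image \<gamma> \<noteq> {}"
proof -
  have cb: "\<And>p. p \<in> cbox (0,0) (w,h) \<Longrightarrow> pv p \<in> cbox (pv (0,0)) (pv (w,h))"
    by (subst mem_cbox_pv) (auto simp: cbox_Pair_iff)
  obtain z where z1: "z \<in> path_image (pv \<circ> g)" and z2: "z \<in> path_image (pv \<circ> reversepath \<gamma>)"
  proof (rule fashoda[of "pv \<circ> g" "pv \<circ> reversepath \<gamma>" "pv (0,0)" "pv (w,h)"])
    show "path (pv \<circ> g)" "path (pv \<circ> reversepath \<gamma>)"
      using assms by (auto intro!: path_continuous_image continuous_pv)
    show "path_image (pv \<circ> g) \<subseteq> cbox (pv (0, 0)) (pv (w, h))"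
      using gi cb by (auto simp: path_image_compose)
    show "path_image (pv \<circ> reversepath \<gamma>) \<subseteq> cbox (pv (0, 0)) (pv (w, h))"
      using gam cb by (auto simp: path_image_compose)
  qed (use assms in \<open>auto simp: pathstart_compose pathfinish_compose\<close>)
  then show ?thesis
    by (auto simp: path_image_compose dest!: pv_inj)
qed

definition cellset :: "real \<Rightarrow> int \<times> int \<Rightarrow> (real \<times> real) set" where
  "cellset s k = {real_of_int (fst k) * s ..< (real_of_int (fst k) + 1) * s} \<times>
                 {real_of_int (snd k) * s ..< (real_of_int (snd k) + 1) * s}"

definition cidx :: "real \<Rightarrow> real \<times> real \<Rightarrow> int \<times> int" where
  "cidx s p = (\<lfloor>fst p / s\<rfloor>, \<lfloor>snd p / s\<rfloor>)"

lemma in_cell: "s > 0 \<Longrightarrow> p \<in> cellset s (cidx s p)"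
  by (auto simp: cellset_def cidx_def mem_Times_iff floor_divide_lower floor_divide_upper)

lemma floor_close:
  assumes "s > 0" "\<bar>a - b\<bar> \<le> s"
  shows "\<bar>\<lfloor>a / s\<rfloor> - \<lfloor>b / s\<rfloor>\<bar> \<le> 1"
proof -
  have "a / s \<le> b / s + 1" "b / s \<le> a / s + 1"
    using assms by (auto simp: field_simps)
  then have "\<lfloor>a / s\<rfloor> \<le> \<lfloor>b / s\<rfloor> + 1" "\<lfloor>b / s\<rfloor> \<le> \<lfloor>a / s\<rfloor> + 1"
    using floor_mono[of "a/s" "b/s+1"] floor_mono[of "b/s" "a/s+1"] by simp_all
  then show ?thesis by linarith
qed

lemma cell_sets: "cellset s k \<in> sets lborel"
  unfolding cellset_def sets_lborel borel_prod[symmetric]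
  by (intro pair_measureI) auto

lemma rect_cbox: "rect A = cbox (0,0) (2 * sqrt A, sqrt A)" by (simp add: rect_def)

lemma rect_mem: "p \<in> rect A \<longleftrightarrow> 0 \<le> fst p \<and> fst p \<le> 2 * sqrt A \<and> 0 \<le> snd p \<and> snd p \<le> sqrt A"
  by (cases p) (simp add: rect_def cbox_Pair_iff)

lemma emeasure_rect: "A > 0 \<Longrightarrow> emeasure lborel (rect A) = ennreal (2 * A)"
  by (simp add: rect_def emeasure_lborel_cbox_eq Basis_prod_def inner_Pair)

lemma measure_rect: "A > 0 \<Longrightarrow> measure lborel (rect A) = 2 * A"
  by (simp add: measure_def emeasure_rect)

lemma prob_U: "A > 0 \<Longrightarrow> prob_space (uniform_measure lborel (rect A))"
  by (rule prob_space_uniform_measure) (auto simp: emeasure_rect)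

lemma cell_prob:
  assumes "A > 0" "s > 0"
  shows "measure (uniform_measure lborel (rect A)) (cellset s k) \<le> s^2 / (2 * A)"
proof -
  define u where "u = real_of_int (fst k)"
  define v where "v = real_of_int (snd k)"
  have sub: "rect A \<inter> cellset s k \<subseteq> cbox (u * s, v * s) ((u+1) * s, (v+1) * s)"
    by (auto simp: cellset_def u_def v_def)
  have "measure lborel (rect A \<inter> cellset s k) \<le> measure lborel (cbox (u * s, v * s) ((u+1) * s, (v+1) * s))"
    by (rule measure_mono_fmeasurable[OF sub _ fmeasurable_cbox])
       (use cell_sets[of s k] in \<open>auto simp: rect_def\<close>)
  also have "\<dots> = ((u+1) * s - u * s) * ((v+1) * s - v * s)" using assms
    by (simp add: measure_def emeasure_lborel_cbox_eq Basis_prod_def inner_Pair)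
  also have "\<dots> = s * s" by (simp add: algebra_simps)
  finally have m: "measure lborel (rect A \<inter> cellset s k) \<le> s^2" by (simp add: power2_eq_square)
  have "measure (uniform_measure lborel (rect A)) (cellset s k)
        = measure lborel (rect A \<inter> cellset s k) / measure lborel (rect A)"
    by (rule measure_uniform_measure) (use assms cell_sets[of s k, unfolded sets_lborel] in \<open>auto simp: emeasure_rect\<close>)
  also have "\<dots> = measure lborel (rect A \<inter> cellset s k) / (2 * A)"
    using measure_rect[OF assms(1)] by simp
  also have "\<dots> \<le> s^2 / (2 * A)"
    by (rule divide_right_mono[OF m]) (use assms in simp)
  finally show ?thesis .
qed

lemma E_prob:
  fixes f :: "nat \<Rightarrow> nat" and C :: "nat \<Rightarrow> (real \<times> real) set"
  assumes A: "A > 0" and inj: "inj_on f {0..K}" and fr: "f ` {0..K} \<subseteq> {..<N}"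
    and C: "\<And>j. C j \<in> sets lborel"
  shows "measure (PiM {..<N} (\<lambda>_. uniform_measure lborel (rect A)))
           {\<omega> \<in> space (PiM {..<N} (\<lambda>_. uniform_measure lborel (rect A))). \<forall>j\<in>{0..K}. \<omega> (f j) \<in> C j}
         = (\<Prod>j\<in>{0..K}. measure (uniform_measure lborel (rect A)) (C j))"
proof -
  define U where "U = uniform_measure lborel (rect A)"
  define M where "M = PiM {..<N} (\<lambda>_. U)"
  define g where "g = the_inv_into {0..K} f"
  define J where "J = f ` {0..K}"
  define X where "X i = C (g i)" for i
  have gf: "\<And>j. j \<in> {0..K} \<Longrightarrow> g (f j) = j" unfolding g_def using inj by (simp add: the_inv_into_f_f)
  have pU: "prob_space U" unfolding U_def using prob_U[OF A] .
  have XS: "\<And>i. X i \<in> sets U" unfolding X_def U_def using C by simp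
  have seteq: "{\<omega> \<in> space M. \<forall>j\<in>{0..K}. \<omega> (f j) \<in> C j} = prod_emb {..<N} (\<lambda>_. U) J (PiE J X)"
  proof -
    have eq: "\<And>\<omega>. (\<forall>i\<in>J. \<omega> i \<in> X i) \<longleftrightarrow> (\<forall>j\<in>{0..K}. \<omega> (f j) \<in> C j)"
      by (simp add: J_def X_def gf)
    have r: "\<And>\<omega>. restrict \<omega> J \<in> PiE J X \<longleftrightarrow> (\<forall>i\<in>J. \<omega> i \<in> X i)"
      by (simp add: PiE_iff)
    show ?thesis
    proof (rule set_eqI)
      fix x
      show "x \<in> {\<omega> \<in> space M. \<forall>j\<in>{0..K}. \<omega> (f j) \<in> C j} \<longleftrightarrow> x \<in> prod_emb {..<N} (\<lambda>_. U) J (PiE J X)"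
        using r[of x] eq[of x] by (simp add: prod_emb_iff M_def space_PiM PiE_iff conj_ac)
    qed
  qed
  have "emeasure M (prod_emb {..<N} (\<lambda>_. U) J (PiE J X)) = (\<Prod>i\<in>J. emeasure U (X i))"
    unfolding M_def by (rule emeasure_PiM_emb) (use pU fr XS in \<open>auto simp: J_def\<close>)
  also have "\<dots> = (\<Prod>i\<in>J. ennreal (measure U (X i)))"
    using pU by (simp add: finite_measure.emeasure_eq_measure prob_space.finite_measure)
  also have "\<dots> = ennreal (\<Prod>i\<in>J. measure U (X i))"
    by (rule prod_ennreal) simp
  finally have em: "emeasure M (prod_emb {..<N} (\<lambda>_. U) J (PiE J X)) = ennreal (\<Prod>i\<in>J. measure U (X i))" .
  have "measure M (prod_emb {..<N} (\<lambda>_. U) J (PiE J X)) = (\<Prod>i\<in>J. measure U (X i))"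
    unfolding measure_def em by (rule enn2real_ennreal) (simp add: prod_nonneg)
  also have "\<dots> = (\<Prod>j\<in>{0..K}. measure U (X (f j)))"
    unfolding J_def using prod.reindex[OF inj, of "\<lambda>i. measure U (X i)"] by (simp only: comp_def)
  also have "\<dots> = (\<Prod>j\<in>{0..K}. measure U (C j))"
    by (rule prod.cong) (simp_all only: X_def gf)
  finally have "measure M {\<omega> \<in> space M. \<forall>j\<in>{0..K}. \<omega> (f j) \<in> C j} = (\<Prod>j\<in>{0..K}. measure U (C j))"
    unfolding seteq .
  then show ?thesis unfolding M_def U_def .
qed

lemma fst_dist: "\<bar>fst p - fst q\<bar> \<le> dist p q"
  by (metis dist_fst_le dist_real_def)
lemma snd_dist: "\<bar>snd p - snd q\<bar> \<le> dist p q"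
  by (metis dist_snd_le dist_real_def)

definition chainL :: "(real \<times> real) set \<Rightarrow> real \<Rightarrow> real \<Rightarrow> (real \<times> real) list \<Rightarrow> bool" where
  "chainL P x1 r xs \<longleftrightarrow> xs \<noteq> [] \<and> distinct xs \<and> set xs \<subseteq> P \<and> fst (hd xs) \<le> x1 + r \<and>
     (\<forall>j. Suc j < length xs \<longrightarrow> dist (xs!j) (xs!Suc j) \<le> 2*r)"

lemma chainL_take:
  assumes "chainL P x1 r xs" "i < length xs"
  shows "chainL P x1 r (take (Suc i) xs)"
  using assms unfolding chainL_def
  by (auto simp: hd_take dest: in_set_takeD)

lemma chainL_snoc:
  assumes "chainL P x1 r xs" "p \<in> P" "p \<notin> set xs" "dist (last xs) p \<le> 2*r"
  shows "chainL P x1 r (xs @ [p])"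
proof -
  have ne: "xs \<noteq> []" using assms(1) by (simp add: chainL_def)
  have step: "dist ((xs@[p])!j) ((xs@[p])!Suc j) \<le> 2*r" if j: "Suc j < length (xs@[p])" for j
  proof (cases "Suc j < length xs")
    case True
    then show ?thesis using assms(1) by (simp add: chainL_def nth_append)
  next
    case False
    then have "Suc j = length xs" using j by simp
    then have "(xs@[p])!j = last xs" "(xs@[p])!Suc j = p"
      using ne by (auto simp: nth_append last_conv_nth simp flip: \<open>Suc j = length xs\<close>)
    then show ?thesis using assms(4) by simp
  qed
  show ?thesis using assms(1-3) step ne unfolding chainL_def by auto
qed

lemma chain_exists:
  fixes P :: "(real \<times> real) set"
  assumes "finite P" "x1 < x2" "r > 0"
    and C: "connected C" "C \<subseteq> {q. fst q \<le> x1} \<union> {q. fst q \<ge> x2} \<union> (\<Union>p\<in>P. cball p r)"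
    and CL: "C \<inter> {q. fst q \<le> x1} \<noteq> {}" and CR: "C \<inter> {q. fst q \<ge> x2} \<noteq> {}"
  shows "\<exists>xs. chainL P x1 r xs \<and> fst (last xs) \<ge> x2 - r"
proof (rule ccontr)
  assume no: "\<not> ?thesis"
  define J where "J = {p\<in>P. \<exists>xs. chainL P x1 r xs \<and> last xs = p}"
  define T1 where "T1 = {q. fst q \<le> x1} \<union> (\<Union>p\<in>J. cball p r)"
  define T2 where "T2 = {q. fst q \<ge> x2} \<union> (\<Union>p\<in>P-J. cball p r)"
  have fJ: "finite J" "finite (P - J)" using assms(1) by (auto simp: J_def)
  have cl1: "closed T1" unfolding T1_def
    by (intro closed_Un closed_UN fJ ballI closed_cball) (simp add: closed_Collect_le continuous_on_fst continuous_on_const)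
  have cl2: "closed T2" unfolding T2_def
    by (intro closed_Un closed_UN fJ ballI closed_cball) (simp add: closed_Collect_le continuous_on_fst continuous_on_const)
  have sub: "C \<subseteq> T1 \<union> T2" using C(2) unfolding T1_def T2_def by blast
  have disj: "T1 \<inter> T2 = {}"
  proof (rule ccontr)
    assume "T1 \<inter> T2 \<noteq> {}"
    then obtain q where q1: "q \<in> T1" and q2: "q \<in> T2" by blast
    show False
    proof (cases "fst q \<le> x1")
      case True
      show False
      proof (cases "x2 \<le> fst q")
        case True with \<open>fst q \<le> x1\<close> assms(2) show False by simp
      next
        case False
        then obtain p where p: "p \<in> P - J" "dist p q \<le> r" using q2 by (auto simp: T2_def)
        have "fst p \<le> x1 + r"
          using p(2) \<open>fst q \<le> x1\<close> using fst_dist[of p q] by linarith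
        then have "chainL P x1 r [p]" using p(1) by (auto simp: chainL_def)
        then have "p \<in> J" using p(1) by (auto simp: J_def)
        with p show False by simp
      qed
    next
      case False
      then obtain p' where p': "p' \<in> J" "dist p' q \<le> r" using q1 by (auto simp: T1_def)
      then obtain xs where xs: "chainL P x1 r xs" "last xs = p'" by (auto simp: J_def)
      show False
      proof (cases "x2 \<le> fst q")
        case True
        have "fst p' \<ge> x2 - r" using p'(2) True using fst_dist[of p' q] by linarith
        with xs no show False by blast
      next
        case False
        then obtain p where p: "p \<in> P - J" "dist p q \<le> r" using q2 by (auto simp: T2_def)
        have d: "dist (last xs) p \<le> 2*r" using p(2) p'(2) xs(2)
          by (smt (verit) dist_commute dist_triangle)
        show False
        proof (cases "p \<in> set xs")
          case True
          then obtain i where i: "i < length xs" "xs ! i = p" by (auto simp: in_set_conv_nth)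
          have "chainL P x1 r (take (Suc i) xs)" using chainL_take[OF xs(1) i(1)] .
          moreover have "last (take (Suc i) xs) = p" using i using i by (simp add: take_Suc_conv_app_nth)
          ultimately have "p \<in> J" using p(1) by (auto simp: J_def)
          with p show False by simp
        next
          case False
          have "chainL P x1 r (xs @ [p])" using chainL_snoc[OF xs(1) _ False d] p(1) by simp
          then have "p \<in> J" using p(1) by (auto simp: J_def intro!: exI[of _ "xs@[p]"])
          with p show False by simp
        qed
      qed
    qed
  qed
  have "C \<inter> T1 \<noteq> {}" using CL unfolding T1_def by blast
  moreover have "C \<inter> T2 \<noteq> {}" using CR unfolding T2_def by blast
  ultimately show False
    using C(1) cl1 cl2 sub disj unfolding connected_closed by blast
qed

lemma path_crop:
  fixes g :: "real \<Rightarrow> real \<times> real"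
  assumes "path g" "snd (pathstart g) > h" "snd (pathfinish g) < 0" "h > 0"
  shows "\<exists>\<gamma>. path \<gamma> \<and> path_image \<gamma> \<subseteq> path_image g \<and>
             path_image \<gamma> \<subseteq> {q. 0 \<le> snd q \<and> snd q \<le> h} \<and>
             snd (pathstart \<gamma>) = h \<and> snd (pathfinish \<gamma>) = 0"
proof -
  define f where "f = snd \<circ> g"
  have cf: "continuous_on {0..1} f"
    using assms(1) unfolding f_def path_def by (intro continuous_on_compose continuous_on_snd) auto
  have f0: "f 0 > h" and f1: "f 1 < 0"
    using assms by (auto simp: f_def pathstart_def pathfinish_def)
  define T1 where "T1 = {0..1} \<inter> f -` {..0}"
  have cT1: "closed T1" unfolding T1_def
    by (rule continuous_closed_preimage[OF cf]) auto
  have "1 \<in> T1" using f1 by (simp add: T1_def)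
  define t1 where "t1 = Inf T1"
  have bT1: "bdd_below T1" by (auto simp: T1_def bdd_below_def)
  have t1T: "t1 \<in> T1" unfolding t1_def
    using closed_contains_Inf[of T1] cT1 \<open>1 \<in> T1\<close> bT1 by blast
  have t1le: "\<And>t. t \<in> T1 \<Longrightarrow> t1 \<le> t" unfolding t1_def using bT1 by (simp add: cInf_lower)
  have t1r: "0 \<le> t1" "t1 \<le> 1" "f t1 \<le> 0" using t1T by (auto simp: T1_def)
  have "\<exists>t\<ge>0. t \<le> t1 \<and> f t = 0"
    by (rule IVT2') (use t1r f0 assms(4) in \<open>auto intro: continuous_on_subset[OF cf]\<close>)
  then obtain t where t: "0 \<le> t" "t \<le> t1" "f t = 0" by blast
  then have "t \<in> T1" using t1r by (auto simp: T1_def)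
  then have "t = t1" using t1le t by fastforce
  with t have ft1: "f t1 = 0" by simp
  define T0 where "T0 = {0..t1} \<inter> f -` {h..}"
  have cT0: "closed T0" unfolding T0_def
    by (rule continuous_closed_preimage) (use t1r in \<open>auto intro: continuous_on_subset[OF cf]\<close>)
  have "0 \<in> T0" using f0 t1r by (simp add: T0_def)
  define t0 where "t0 = Sup T0"
  have bT0: "bdd_above T0" by (auto simp: T0_def bdd_above_def)
  have t0T: "t0 \<in> T0" unfolding t0_def
    using closed_contains_Sup[of T0] cT0 \<open>0 \<in> T0\<close> bT0 by blast
  have t0ge: "\<And>t. t \<in> T0 \<Longrightarrow> t \<le> t0" unfolding t0_def using bT0 by (simp add: cSup_upper)
  have t0r: "0 \<le> t0" "t0 \<le> t1" "f t0 \<ge> h" using t0T by (auto simp: T0_def)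
  have "\<exists>t\<ge>t0. t \<le> t1 \<and> f t = h"
    by (rule IVT2') (use t0r t1r ft1 assms(4) in \<open>auto intro: continuous_on_subset[OF cf]\<close>)
  then obtain t' where t': "t0 \<le> t'" "t' \<le> t1" "f t' = h" by blast
  then have "t' \<in> T0" using t0r by (auto simp: T0_def)
  then have "t' = t0" using t0ge t' by fastforce
  with t' have ft0: "f t0 = h" by simp
  define \<gamma> where "\<gamma> = subpath t0 t1 g"
  have img: "path_image \<gamma> = g ` {t0..t1}"
    using t0r by (simp add: \<gamma>_def path_image_subpath)
  have range: "0 \<le> f s \<and> f s \<le> h" if s: "s \<in> {t0..t1}" for s
  proof
    show "0 \<le> f s"
    proof (rule ccontr)
      assume "\<not> 0 \<le> f s"
      then have "s \<in> T1" using s t0r t1r by (auto simp: T1_def)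
      then have "s = t1" using t1le s by fastforce
      with ft1 \<open>\<not> 0 \<le> f s\<close> show False by simp
    qed
    show "f s \<le> h"
    proof (rule ccontr)
      assume "\<not> f s \<le> h"
      then have "s \<in> T0" using s t0r t1r by (auto simp: T0_def)
      then have "s = t0" using t0ge s by fastforce
      with ft0 \<open>\<not> f s \<le> h\<close> show False by simp
    qed
  qed
  show ?thesis
  proof (intro exI conjI)
    show "path \<gamma>" unfolding \<gamma>_def using assms(1) t0r t1r by (intro path_subpath) auto
    show "path_image \<gamma> \<subseteq> path_image g" unfolding \<gamma>_def using t0r t1r
      by (intro path_image_subpath_subset) auto
    show "path_image \<gamma> \<subseteq> {q. 0 \<le> snd q \<and> snd q \<le> h}"
      using range by (auto simp: img f_def)
    show "snd (pathstart \<gamma>) = h" using ft0 by (simp add: \<gamma>_def f_def)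
    show "snd (pathfinish \<gamma>) = 0" using ft1 by (simp add: \<gamma>_def f_def)
  qed
qed

lemma seg_fst_snd:
  "z \<in> closed_segment u v \<Longrightarrow> fst z \<in> closed_segment (fst u) (fst v) \<and> snd z \<in> closed_segment (snd u) (snd v)"
  by (auto simp: closed_segment_def)

lemma cut_or_chain:
  fixes P :: "(real \<times> real) set"
  assumes fin: "finite P" and x12: "x1 < x2" and r: "r > 0" and h: "h > 0"
    and Ph: "\<forall>p\<in>P. 0 \<le> snd p \<and> snd p \<le> h"
  shows "(\<exists>\<gamma>. path \<gamma> \<and> path_image \<gamma> \<subseteq> {q. x1 < fst q \<and> fst q < x2 \<and> 0 \<le> snd q \<and> snd q \<le> h} \<and>
            snd (pathstart \<gamma>) = h \<and> snd (pathfinish \<gamma>) = 0 \<and>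
            (\<forall>p\<in>P. \<forall>z\<in>path_image \<gamma>. r < dist p z))
         \<or> (\<exists>xs. chainL P x1 r xs \<and> fst (last xs) \<ge> x2 - r)"
proof -
  define Lw :: "(real \<times> real) set" where "Lw = {q. fst q \<le> x1}"
  define Rw :: "(real \<times> real) set" where "Rw = {q. fst q \<ge> x2}"
  define S where "S = Lw \<union> Rw \<union> (\<Union>p\<in>P. cball p r)"
  define m where "m = (x1 + x2) / 2"
  define ya where "ya = h + r + 1"
  define yb where "yb = - r - 1"
  define a where "a = (m, ya)"
  define b where "b = (m, yb)"
  have clS: "closed S" unfolding S_def Lw_def Rw_def
    by (intro closed_Un closed_UN fin ballI closed_cball)
       (simp_all add: closed_Collect_le continuous_on_fst continuous_on_const)
  have notball_a: "z \<notin> cball p r" if "p \<in> P" "snd z = ya" for p z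
  proof
    assume "z \<in> cball p r"
    then have "dist p z \<le> r" by simp
    moreover have "\<bar>snd p - snd z\<bar> \<le> dist p z" by (rule snd_dist)
    ultimately show False using Ph that ya_def r by auto
  qed
  have notball_b: "z \<notin> cball p r" if "p \<in> P" "snd z = yb" for p z
  proof
    assume "z \<in> cball p r"
    then have "dist p z \<le> r" by simp
    moreover have "\<bar>snd p - snd z\<bar> \<le> dist p z" by (rule snd_dist)
    ultimately show False using Ph that yb_def r by auto
  qed
  show ?thesis
  proof (cases "connected_component (- S) a b")
    case True
    have "open (- S)" using clS by auto
    then have "path_component (- S) a b"
      using True open_path_connected_component by metis
    then obtain g where g: "path g" "path_image g \<subseteq> - S" "pathstart g = a" "pathfinish g = b"
      unfolding path_component_def by blast
    obtain \<gamma> where \<gamma>: "path \<gamma>" "path_image \<gamma> \<subseteq> path_image g"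
        "path_image \<gamma> \<subseteq> {q. 0 \<le> snd q \<and> snd q \<le> h}" "snd (pathstart \<gamma>) = h" "snd (pathfinish \<gamma>) = 0"
      using path_crop[OF g(1) _ _ h] g(3,4) r h by (auto simp: a_def b_def ya_def yb_def)
    have "path_image \<gamma> \<subseteq> - S" using \<gamma>(2) g(2) by blast
    then have "path_image \<gamma> \<subseteq> {q. x1 < fst q \<and> fst q < x2 \<and> 0 \<le> snd q \<and> snd q \<le> h}"
         "\<forall>p\<in>P. \<forall>z\<in>path_image \<gamma>. r < dist p z"
      using \<gamma>(3) by (auto simp: S_def Lw_def Rw_def subset_iff not_le)
    then show ?thesis using \<gamma> by blast
  next
    case False
    obtain C where C: "C \<in> components S" "\<not> connected_component (- C) a b"
      using separation_by_component_closed_pointwise[OF clS False] by blast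
    have Cc: "connected C" and CS: "C \<subseteq> S" and Cne: "C \<noteq> {}"
      using in_components_connected[OF C(1)] in_components_subset[OF C(1)] in_components_nonempty[OF C(1)] by auto
    have CR: "C \<inter> Rw \<noteq> {}"
    proof
      assume CR0: "C \<inter> Rw = {}"
      define c1 where "c1 = (x2 + 1, ya)"
      define c2 where "c2 = (x2 + 1, yb)"
      define T where "T = closed_segment a c1 \<union> closed_segment c1 c2 \<union> closed_segment c2 b"
      have "connected T" unfolding T_def
        by (intro connected_Un connected_segment) (auto intro: ends_in_segment)
      moreover have "T \<subseteq> - C"
      proof
        fix z assume z: "z \<in> T"
        show "z \<in> - C"
        proof
          assume zC: "z \<in> C"
          then have zS: "z \<in> S" using CS by blast
          have "z \<notin> Rw" using zC CR0 by blast
          consider "z \<in> closed_segment a c1" | "z \<in> closed_segment c1 c2" | "z \<in> closed_segment c2 b"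
            using z T_def by blast
          then show False
          proof cases
            case 1
            then have "snd z = ya" "fst z \<ge> m" using seg_fst_snd[OF 1] x12
              by (auto simp: a_def c1_def closed_segment_eq_real_ivl m_def split: if_splits)
            then show False using zS \<open>z \<notin> Rw\<close> notball_a x12
              by (auto simp: S_def Lw_def m_def)
          next
            case 2
            then have "fst z = x2 + 1" using seg_fst_snd[OF 2]
              by (auto simp: c2_def c1_def)
            then show False using \<open>z \<notin> Rw\<close> by (simp add: Rw_def)
          next
            case 3
            then have "snd z = yb" "fst z \<ge> m" using seg_fst_snd[OF 3] x12
              by (auto simp: b_def c2_def closed_segment_eq_real_ivl m_def split: if_splits)
            then show False using zS \<open>z \<notin> Rw\<close> notball_b x12
              by (auto simp: S_def Lw_def m_def)
          qed
        qed
      qed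
      moreover have "a \<in> T" "b \<in> T" by (auto simp: T_def)
      ultimately have "connected_component (- C) a b"
        unfolding connected_component_def by blast
      with C(2) show False by simp
    qed
    have CL: "C \<inter> Lw \<noteq> {}"
    proof
      assume CL0: "C \<inter> Lw = {}"
      define c1 where "c1 = (x1 - 1, ya)"
      define c2 where "c2 = (x1 - 1, yb)"
      define T where "T = closed_segment a c1 \<union> closed_segment c1 c2 \<union> closed_segment c2 b"
      have "connected T" unfolding T_def
        by (intro connected_Un connected_segment) (auto intro: ends_in_segment)
      moreover have "T \<subseteq> - C"
      proof
        fix z assume z: "z \<in> T"
        show "z \<in> - C"
        proof
          assume zC: "z \<in> C"
          then have zS: "z \<in> S" using CS by blast
          have "z \<notin> Lw" using zC CL0 by blast
          consider "z \<in> closed_segment a c1" | "z \<in> closed_segment c1 c2" | "z \<in> closed_segment c2 b"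
            using z T_def by blast
          then show False
          proof cases
            case 1
            then have "snd z = ya" "fst z \<le> m" using seg_fst_snd[OF 1] x12
              by (auto simp: a_def c1_def closed_segment_eq_real_ivl m_def split: if_splits)
            then show False using zS \<open>z \<notin> Lw\<close> notball_a x12
              by (auto simp: S_def Rw_def m_def)
          next
            case 2
            then have "fst z = x1 - 1" using seg_fst_snd[OF 2]
              by (auto simp: c2_def c1_def)
            then show False using \<open>z \<notin> Lw\<close> by (simp add: Lw_def)
          next
            case 3
            then have "snd z = yb" "fst z \<le> m" using seg_fst_snd[OF 3] x12
              by (auto simp: b_def c2_def closed_segment_eq_real_ivl m_def split: if_splits)
            then show False using zS \<open>z \<notin> Lw\<close> notball_b x12
              by (auto simp: S_def Rw_def m_def)
          qed
        qed
      qed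
      moreover have "a \<in> T" "b \<in> T" by (auto simp: T_def)
      ultimately have "connected_component (- C) a b"
        unfolding connected_component_def by blast
      with C(2) show False by simp
    qed
    have "\<exists>xs. chainL P x1 r xs \<and> fst (last xs) \<ge> x2 - r"
      by (rule chain_exists[OF fin x12 r Cc]) (use CS CL CR in \<open>auto simp: S_def Lw_def Rw_def\<close>)
    then show ?thesis by blast
  qed
qed

definition kap :: "int \<times> int \<Rightarrow> (nat \<Rightarrow> int \<times> int) \<Rightarrow> nat \<Rightarrow> int \<times> int" where
  "kap k0 mv j = (fst k0 + (\<Sum>i<j. fst (mv i)), snd k0 + (\<Sum>i<j. snd (mv i)))"

definition Ev :: "real \<Rightarrow> nat \<Rightarrow> nat \<Rightarrow> real \<Rightarrow> (nat \<Rightarrow> nat) \<times> (int \<times> int) \<times> (nat \<Rightarrow> int \<times> int)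
                   \<Rightarrow> (nat \<Rightarrow> real \<times> real) set" where
  "Ev A N K s idx = {\<omega> \<in> space (PiM {..<N} (\<lambda>_. uniform_measure lborel (rect A))).
       \<forall>j\<in>{0..K}. \<omega> (fst idx j) \<in> cellset s (kap (fst (snd idx)) (snd (snd idx)) j)}"

definition Fs :: "nat \<Rightarrow> nat \<Rightarrow> (nat \<Rightarrow> nat) set" where
  "Fs N K = {f \<in> {0..K} \<rightarrow>\<^sub>E {..<N}. inj_on f {0..K}}"

definition Cells :: "real \<Rightarrow> real \<Rightarrow> (int \<times> int) set" where
  "Cells A s = {0..\<lfloor>2 * sqrt A / s\<rfloor>} \<times> {0..\<lfloor>sqrt A / s\<rfloor>}"

definition Mv :: "nat \<Rightarrow> (nat \<Rightarrow> int \<times> int) set" where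
  "Mv K = {..<K} \<rightarrow>\<^sub>E ({-1..1} \<times> {-1..1})"

definition Idx where "Idx A N K s = Fs N K \<times> Cells A s \<times> Mv K"

definition Bad where "Bad A N K s = (\<Union>idx\<in>Idx A N K s. Ev A N K s idx)"

lemma finite_Idx: "finite (Idx A N K s)"
  unfolding Idx_def Fs_def Cells_def Mv_def
  by (intro finite_cartesian_product finite_PiE) (auto intro: finite_subset[OF _ finite_PiE[of "{0..K}" "\<lambda>_. {..<N}"]])

lemma Ev_sets:
  assumes "fst idx \<in> Fs N K"
  shows "Ev A N K s idx \<in> sets (PiM {..<N} (\<lambda>_. uniform_measure lborel (rect A)))"
  unfolding Ev_def
proof (rule sets.sets_Collect_finite_All)
  fix j assume j: "j \<in> {0..K}"
  let ?M = "PiM {..<N} (\<lambda>_. uniform_measure lborel (rect A))"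
  have fj: "fst idx j \<in> {..<N}" using assms j by (auto simp: Fs_def PiE_iff)
  have m: "(\<lambda>\<omega>. \<omega> (fst idx j)) \<in> measurable ?M (uniform_measure lborel (rect A))"
    using measurable_component_singleton[OF fj, of "\<lambda>_. uniform_measure lborel (rect A)"] by simp
  have "cellset s (kap (fst (snd idx)) (snd (snd idx)) j) \<in> sets (uniform_measure lborel (rect A))"
    using cell_sets by simp
  from measurable_sets[OF m this]
  show "{\<omega> \<in> space ?M. \<omega> (fst idx j) \<in> cellset s (kap (fst (snd idx)) (snd (snd idx)) j)} \<in> sets ?M"
    by (simp add: vimage_def Int_def conj_commute)
qed simp

lemma Bad_sets: "Bad A N K s \<in> sets (PiM {..<N} (\<lambda>_. uniform_measure lborel (rect A)))"
  unfolding Bad_def using finite_Idx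
  by (intro sets.finite_UN) (auto intro!: Ev_sets simp: Idx_def)

lemma Ev_measure:
  assumes A: "A > 0" and s: "s > 0" and idx: "idx \<in> Idx A N K s"
  shows "measure (PiM {..<N} (\<lambda>_. uniform_measure lborel (rect A))) (Ev A N K s idx) \<le> (s^2 / (2*A))^(K+1)"
proof -
  have f: "inj_on (fst idx) {0..K}" "fst idx ` {0..K} \<subseteq> {..<N}"
    using idx by (auto simp: Idx_def Fs_def PiE_iff)
  have "measure (PiM {..<N} (\<lambda>_. uniform_measure lborel (rect A))) (Ev A N K s idx)
       = (\<Prod>j\<in>{0..K}. measure (uniform_measure lborel (rect A)) (cellset s (kap (fst (snd idx)) (snd (snd idx)) j)))"
    unfolding Ev_def by (rule E_prob[OF A f]) (rule cell_sets)
  also have "\<dots> \<le> (\<Prod>j\<in>{0..K}. s^2 / (2*A))"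
    by (rule prod_mono) (use cell_prob[OF A s] in auto)
  also have "\<dots> = (s^2 / (2*A))^(K+1)" by simp
  finally show ?thesis .
qed

lemma card_Idx: "card (Idx A N K s) \<le> N^(K+1) * card (Cells A s) * 9^K"
proof -
  have "card (Fs N K) \<le> card ({0..K} \<rightarrow>\<^sub>E {..<N})"
    by (rule card_mono) (auto simp: Fs_def intro: finite_PiE)
  also have "\<dots> = N^(K+1)" by (simp add: card_PiE)
  finally have cF: "card (Fs N K) \<le> N^(K+1)" .
  have cM: "card (Mv K) = 9^K" by (simp add: Mv_def card_PiE)
  show ?thesis unfolding Idx_def card_cartesian_product cM
    using cF by (simp add: mult_right_mono)
qed

lemma Bad_measure:
  assumes A: "A > 0" and s: "s > 0"
  shows "measure (PiM {..<N} (\<lambda>_. uniform_measure lborel (rect A))) (Bad A N K s)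
         \<le> real N^(K+1) * real (card (Cells A s)) * 9^K * (s^2 / (2*A))^(K+1)"
proof -
  let ?M = "PiM {..<N} (\<lambda>_. uniform_measure lborel (rect A))"
  have "measure ?M (Bad A N K s) \<le> (\<Sum>idx\<in>Idx A N K s. measure ?M (Ev A N K s idx))"
    unfolding Bad_def by (rule measure_UNION_le[OF finite_Idx]) (auto intro!: Ev_sets simp: Idx_def)
  also have "\<dots> \<le> (\<Sum>idx\<in>Idx A N K s. (s^2 / (2*A))^(K+1))"
    by (rule sum_mono) (rule Ev_measure[OF A s])
  also have "\<dots> = real (card (Idx A N K s)) * (s^2 / (2*A))^(K+1)" by simp
  also have "\<dots> \<le> real (N^(K+1) * card (Cells A s) * 9^K) * (s^2 / (2*A))^(K+1)"
    by (rule mult_right_mono) (use card_Idx[of A N K s] A in \<open>simp_all only: of_nat_le_iff zero_le_power zero_le_divide_iff zero_le_power2 zero_le_mult_iff\<close>, simp)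
  also have "\<dots> = real N^(K+1) * real (card (Cells A s)) * 9^K * (s^2 / (2*A))^(K+1)" by simp
  finally show ?thesis .
qed

lemma cidx_rect:
  assumes "s > 0" "p \<in> rect A"
  shows "cidx s p \<in> Cells A s"
proof -
  have p: "0 \<le> fst p" "fst p \<le> 2 * sqrt A" "0 \<le> snd p" "snd p \<le> sqrt A"
    using assms(2) by (simp_all add: rect_mem)
  have "0 \<le> \<lfloor>fst p / s\<rfloor>" "0 \<le> \<lfloor>snd p / s\<rfloor>" using p assms(1) by simp_all
  moreover have "\<lfloor>fst p / s\<rfloor> \<le> \<lfloor>2 * sqrt A / s\<rfloor>" "\<lfloor>snd p / s\<rfloor> \<le> \<lfloor>sqrt A / s\<rfloor>"
    using p assms(1) by (auto intro!: floor_mono divide_right_mono)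
  ultimately show ?thesis by (simp add: cidx_def Cells_def)
qed

lemma chain_in_Bad:
  assumes s: "s > 0" and om: "\<omega> \<in> space (PiM {..<N} (\<lambda>_. uniform_measure lborel (rect A)))"
    and f: "f \<in> Fs N K"
    and inr: "\<forall>j\<in>{0..K}. \<omega> (f j) \<in> rect A"
    and d: "\<forall>j<K. dist (\<omega> (f j)) (\<omega> (f (Suc j))) \<le> s"
  shows "\<omega> \<in> Bad A N K s"
proof -
  define \<kappa> where "\<kappa> j = cidx s (\<omega> (f j))" for j
  define mv where "mv = restrict (\<lambda>i. (fst (\<kappa> (Suc i)) - fst (\<kappa> i), snd (\<kappa> (Suc i)) - snd (\<kappa> i))) {..<K}"
  have k0: "\<kappa> 0 \<in> Cells A s" unfolding \<kappa>_def by (rule cidx_rect[OF s]) (use inr in auto)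
  have mvD: "mv \<in> Mv K"
  proof -
    have "fst (\<kappa> (Suc i)) - fst (\<kappa> i) \<in> {-1..1} \<and> snd (\<kappa> (Suc i)) - snd (\<kappa> i) \<in> {-1..1}" if i: "i < K" for i
    proof -
      have di: "dist (\<omega> (f i)) (\<omega> (f (Suc i))) \<le> s" using d i by simp
      have "\<bar>fst (\<omega> (f (Suc i))) - fst (\<omega> (f i))\<bar> \<le> s"
        using fst_dist[of "\<omega> (f (Suc i))" "\<omega> (f i)"] di by (simp add: dist_commute)
      moreover have "\<bar>snd (\<omega> (f (Suc i))) - snd (\<omega> (f i))\<bar> \<le> s"
        using snd_dist[of "\<omega> (f (Suc i))" "\<omega> (f i)"] di by (simp add: dist_commute)
      ultimately have "\<bar>fst (\<kappa> (Suc i)) - fst (\<kappa> i)\<bar> \<le> 1 \<and> \<bar>snd (\<kappa> (Suc i)) - snd (\<kappa> i)\<bar> \<le> 1"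
        using floor_close[OF s] by (simp add: \<kappa>_def cidx_def)
      then show ?thesis by (simp add: abs_le_iff)
    qed
    then show ?thesis unfolding Mv_def mv_def by (auto simp: PiE_iff)
  qed
  have kap: "kap (\<kappa> 0) mv j = \<kappa> j" if j: "j \<le> K" for j
  proof -
    have "(\<Sum>i<j. fst (mv i)) = (\<Sum>i<j. fst (\<kappa> (Suc i)) - fst (\<kappa> i))"
      by (rule sum.cong) (use j in \<open>auto simp: mv_def\<close>)
    also have "\<dots> = fst (\<kappa> j) - fst (\<kappa> 0)" by (rule sum_lessThan_telescope)
    finally have 1: "(\<Sum>i<j. fst (mv i)) = fst (\<kappa> j) - fst (\<kappa> 0)" .
    have "(\<Sum>i<j. snd (mv i)) = (\<Sum>i<j. snd (\<kappa> (Suc i)) - snd (\<kappa> i))"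
      by (rule sum.cong) (use j in \<open>auto simp: mv_def\<close>)
    also have "\<dots> = snd (\<kappa> j) - snd (\<kappa> 0)" by (rule sum_lessThan_telescope)
    finally have 2: "(\<Sum>i<j. snd (mv i)) = snd (\<kappa> j) - snd (\<kappa> 0)" .
    show ?thesis by (simp add: kap_def 1 2)
  qed
  have "\<omega> \<in> Ev A N K s (f, \<kappa> 0, mv)"
    unfolding Ev_def using om kap in_cell[OF s] by (auto simp: \<kappa>_def)
  moreover have "(f, \<kappa> 0, mv) \<in> Idx A N K s" using f k0 mvD by (simp add: Idx_def)
  ultimately show ?thesis unfolding Bad_def by blast
qed

lemma chain_fst_bound:
  assumes "\<forall>j. Suc j < length xs \<longrightarrow> dist (xs!j) (xs!Suc j) \<le> d"
  shows "j < length xs \<Longrightarrow> fst (xs!j) \<le> fst (xs!0) + d * real j"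
proof (induction j)
  case 0 then show ?case by simp
next
  case (Suc j)
  then have "fst (xs!j) \<le> fst (xs!0) + d * real j" by simp
  moreover have "dist (xs!j) (xs!Suc j) \<le> d" using assms Suc.prems by blast
  moreover have "\<bar>fst (xs!Suc j) - fst (xs!j)\<bar> \<le> dist (xs!Suc j) (xs!j)" by (rule fst_dist)
  ultimately show ?case by (simp add: dist_commute algebra_simps)
qed

lemma chainL_length:
  assumes "chainL P x1 r xs" "fst (last xs) \<ge> x2 - r"
  shows "x2 - x1 - 2*r \<le> 2*r * (real (length xs) - 1)"
proof -
  have ne: "xs \<noteq> []" using assms(1) by (simp add: chainL_def)
  have "fst (last xs) \<le> fst (xs!0) + 2*r * real (length xs - 1)"
    using chain_fst_bound[of xs "2*r" "length xs - 1"] assms(1) ne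
    by (simp add: chainL_def last_conv_nth)
  moreover have "fst (xs!0) \<le> x1 + r" using assms(1) ne by (simp add: chainL_def hd_conv_nth)
  moreover have "real (length xs - 1) = real (length xs) - 1" using ne by (simp add: of_nat_diff Suc_le_eq)
  ultimately show ?thesis using assms(2) by (simp add: algebra_simps)
qed

lemma L_bound:
  assumes A: "A > 0" and c: "0 < c" "c < 1" and n: "n \<ge> 2"
  shows "c * sqrt (A / real n) * ln (real n) / 2 \<le> sqrt A"
proof -
  have n0: "real n > 0" using n by simp
  have "ln (sqrt (real n)) \<le> sqrt (real n) - 1" by (rule ln_le_minus_one) (use n0 in simp)
  then have lnn: "ln (real n) \<le> 2 * sqrt (real n)" using ln_sqrt[of "real n"] by simp
  have ln0: "ln (real n) \<ge> 0" using n by simp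
  have "c * ln (real n) \<le> 2 * sqrt (real n)"
  proof -
    have "c * ln (real n) \<le> 1 * ln (real n)" using c ln0 by (intro mult_right_mono) auto
    then show ?thesis using lnn by simp
  qed
  then have "c * ln (real n) / (2 * sqrt (real n)) \<le> 1" using n0 by (simp add: divide_le_eq)
  moreover have "0 \<le> c * ln (real n) / (2 * sqrt (real n))" using c ln0 n0 by simp
  ultimately have "sqrt A * (c * ln (real n) / (2 * sqrt (real n))) \<le> sqrt A * 1"
    by (intro mult_left_mono) (use A in auto)
  then have "sqrt A * (c * ln (real n) / (2 * sqrt (real n))) \<le> sqrt A" by simp
  moreover have "c * sqrt (A / real n) * ln (real n) / 2 = sqrt A * (c * ln (real n) / (2 * sqrt (real n)))"
    by (simp add: real_sqrt_divide field_simps)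
  ultimately show ?thesis by simp
qed

lemma infdist_ge_lemma:
  fixes S :: "(real \<times> real) set"
  assumes "S \<noteq> {}" "\<forall>z\<in>S. r < dist p z"
  shows "r \<le> infdist p S"
proof -
  have "r \<le> (INF z\<in>S. dist p z)"
    by (rule cINF_greatest) (use assms in \<open>auto simp: less_imp_le\<close>)
  then show ?thesis unfolding infdist_def using assms(1) by simp
qed

lemma good_of_not_Bad:
  assumes A: "A > 0" and c: "0 < c" "c < 1" and n: "n \<ge> 2"
    and om: "\<omega> \<in> space (node_space A n)"
    and inr: "\<forall>i<2*n. \<omega> i \<in> rect A"
    and nb: "\<omega> \<notin> Bad A (2*n) (nat \<lfloor>ln (real n)\<rfloor> - 1) (c * sqrt (A / real n))"
  shows "good_config A c n \<omega>"
proof -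
  define s where "s = c * sqrt (A / real n)"
  define r where "r = s / 2"
  define L where "L = c * sqrt (A / real n) * ln (real n)"
  define K where "K = nat \<lfloor>ln (real n)\<rfloor> - 1"
  define x1 where "x1 = sqrt A - L/2"
  define x2 where "x2 = sqrt A + L/2"
  define P where "P = \<omega> ` {..<2*n}"
  have n0: "real n > 0" using n by simp
  have s0: "s > 0" unfolding s_def using A c n0 by simp
  have r0: "r > 0" using s0 by (simp add: r_def)
  have ln0: "ln (real n) > 0" using n by simp
  have L0: "L > 0" unfolding L_def using A c n0 ln0 by simp
  have Ls: "L = s * ln (real n)" by (simp add: L_def s_def)
  have Lb: "L / 2 \<le> sqrt A" unfolding L_def using L_bound[OF A c n] .
  have x12: "x1 < x2" using L0 by (simp add: x1_def x2_def)
  have h0: "sqrt A > 0" using A by simp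
  have finP: "finite P" by (simp add: P_def)
  have Ph: "\<forall>p\<in>P. 0 \<le> snd p \<and> snd p \<le> sqrt A" using inr by (auto simp: P_def rect_mem)
  from cut_or_chain[OF finP x12 r0 h0 Ph]
  show ?thesis
  proof
    assume "\<exists>\<gamma>. path \<gamma> \<and> path_image \<gamma> \<subseteq> {q. x1 < fst q \<and> fst q < x2 \<and> 0 \<le> snd q \<and> snd q \<le> sqrt A} \<and>
            snd (pathstart \<gamma>) = sqrt A \<and> snd (pathfinish \<gamma>) = 0 \<and>
            (\<forall>p\<in>P. \<forall>z\<in>path_image \<gamma>. r < dist p z)"
    then obtain \<gamma> where g: "path \<gamma>" "path_image \<gamma> \<subseteq> {q. x1 < fst q \<and> fst q < x2 \<and> 0 \<le> snd q \<and> snd q \<le> sqrt A}"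
        "snd (pathstart \<gamma>) = sqrt A" "snd (pathfinish \<gamma>) = 0" "\<forall>p\<in>P. \<forall>z\<in>path_image \<gamma>. r < dist p z"
      by blast
    have x10: "0 \<le> x1" and x2w: "x2 \<le> 2 * sqrt A" using Lb by (simp_all add: x1_def x2_def)
    have imgR: "path_image \<gamma> \<subseteq> rect A"
      using g(2) x10 x2w by (auto simp: rect_mem)
    have cut: "is_cut A \<gamma>"
      unfolding is_cut_def
    proof (intro conjI allI impI)
      show "path \<gamma>" "path_image \<gamma> \<subseteq> rect A" "snd (pathstart \<gamma>) = sqrt A" "snd (pathfinish \<gamma>) = 0"
        using g imgR by auto
      fix g' assume g': "path g' \<and> path_image g' \<subseteq> rect A \<and> fst (pathstart g') = 0 \<and> fst (pathfinish g') = 2 * sqrt A"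
      show "path_image g' \<inter> path_image \<gamma> \<noteq> {}"
        by (rule fashoda_pair[of g' \<gamma> "2 * sqrt A" "sqrt A"]) (use g' g imgR in \<open>auto simp: rect_def\<close>)
    qed
    have slab: "path_image \<gamma> \<subseteq> mid_slab A (c * sqrt (A / real n) * ln (real n))"
    proof
      fix q assume "q \<in> path_image \<gamma>"
      then have "x1 < fst q" "fst q < x2" using g(2) by auto
      then have "fst q - sqrt A \<le> L / 2" "sqrt A - fst q \<le> L / 2" by (simp_all add: x1_def x2_def)
      then have "\<bar>fst q - sqrt A\<bar> \<le> L / 2" by (simp only: abs_le_iff) simp
      then show "q \<in> mid_slab A (c * sqrt (A / real n) * ln (real n))"
        by (simp add: mid_slab_def L_def[symmetric])
    qed
    have ne: "path_image \<gamma> \<noteq> {}" by (simp add: path_image_def)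
    have clear: "\<forall>i<2 * n. c / 2 * sqrt (A / real n) \<le> infdist (\<omega> i) (path_image \<gamma>)"
    proof (intro allI impI)
      fix i assume "i < 2 * n"
      then have "\<omega> i \<in> P" by (simp add: P_def)
      then have "r \<le> infdist (\<omega> i) (path_image \<gamma>)" using g(5) ne by (intro infdist_ge_lemma) auto
      then show "c / 2 * sqrt (A / real n) \<le> infdist (\<omega> i) (path_image \<gamma>)" by (simp add: r_def s_def)
    qed
    show ?thesis unfolding good_config_def using cut slab clear by blast
  next
    assume "\<exists>xs. chainL P x1 r xs \<and> fst (last xs) \<ge> x2 - r"
    then obtain xs where xs: "chainL P x1 r xs" "fst (last xs) \<ge> x2 - r" by blast
    define l where "l = length xs"
    have l1: "l \<ge> 1" using xs(1) by (simp add: chainL_def l_def Suc_le_eq)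
    have "x2 - x1 - 2*r \<le> 2*r * (real l - 1)" using chainL_length[OF xs] by (simp add: l_def)
    then have "L \<le> s * real l" by (simp add: x1_def x2_def r_def algebra_simps)
    then have "s * ln (real n) \<le> s * real l" by (simp add: Ls)
    then have lnl: "ln (real n) \<le> real l" using s0 by simp
    have "\<lfloor>ln (real n)\<rfloor> \<le> \<lfloor>real l\<rfloor>" by (rule floor_mono[OF lnl])
    then have "nat \<lfloor>ln (real n)\<rfloor> \<le> l" by simp
    then have Kl: "K + 1 \<le> l" using l1 by (simp add: K_def)
    define f where "f = restrict (\<lambda>j. inv_into {..<2*n} \<omega> (xs!j)) {0..K}"
    have xsP: "\<And>j. j \<le> K \<Longrightarrow> xs!j \<in> P" using xs(1) Kl by (auto simp: chainL_def l_def)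
    have fj: "f j \<in> {..<2*n} \<and> \<omega> (f j) = xs!j" if j: "j \<le> K" for j
    proof -
      have m: "xs!j \<in> \<omega> ` {..<2*n}" using xsP[OF j] by (simp add: P_def)
      have "f j = inv_into {..<2*n} \<omega> (xs!j)" using j by (simp add: f_def)
      then show ?thesis using inv_into_into[OF m] f_inv_into_f[OF m] by simp
    qed
    have fF: "f \<in> Fs (2*n) K"
    proof -
      have "inj_on f {0..K}"
      proof (rule inj_onI)
        fix a b assume ab: "a \<in> {0..K}" "b \<in> {0..K}" "f a = f b"
        have "\<omega> (f a) = xs!a" "\<omega> (f b) = xs!b" using fj ab(1,2) by auto
        then have "xs!a = xs!b" using ab(3) by simp
        moreover have "distinct xs" using xs(1) by (simp add: chainL_def)
        moreover have "a < length xs" "b < length xs" using ab Kl by (auto simp: l_def)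
        ultimately show "a = b" by (simp add: nth_eq_iff_index_eq)
      qed
      moreover have "f \<in> {0..K} \<rightarrow>\<^sub>E {..<2*n}" using fj by (auto simp: f_def)
      ultimately show ?thesis by (simp add: Fs_def)
    qed
    have om': "\<omega> \<in> space (PiM {..<2*n} (\<lambda>_. uniform_measure lborel (rect A)))"
      using om by (simp add: node_space_def)
    have "\<omega> \<in> Bad A (2*n) K s"
    proof (rule chain_in_Bad[OF s0 om' fF])
      show "\<forall>j\<in>{0..K}. \<omega> (f j) \<in> rect A"
      proof
        fix j assume "j \<in> {0..K}"
        then have "f j < 2*n" using fj by simp
        then show "\<omega> (f j) \<in> rect A" using inr by simp
      qed
      show "\<forall>j<K. dist (\<omega> (f j)) (\<omega> (f (Suc j))) \<le> s"
      proof (intro allI impI)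
        fix j assume j: "j < K"
        then have "dist (xs!j) (xs!Suc j) \<le> 2*r" using xs(1) Kl by (simp add: chainL_def l_def)
        then show "dist (\<omega> (f j)) (\<omega> (f (Suc j))) \<le> s" using fj j by (simp add: r_def)
      qed
    qed
    then show ?thesis using nb unfolding K_def s_def by blast
  qed
qed

lemma card_Cells_bound:
  assumes A: "A > 0" and c: "0 < c" "c < 1" and n: "n \<ge> 1"
  shows "real (card (Cells A (c * sqrt (A / real n)))) \<le> 6 * real n / c^2"
proof -
  define t where "t = sqrt (real n) / c"
  have n0: "real n \<ge> 1" using n by simp
  have sq1: "sqrt (real n) \<ge> 1" using n0 by simp
  have "c \<le> sqrt (real n)" using sq1 c by linarith
  then have t1: "t \<ge> 1" unfolding t_def using c by (simp add: le_divide_eq)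
  have e1: "sqrt A / (c * sqrt (A / real n)) = t"
    using A c n0 by (simp add: t_def real_sqrt_divide field_simps)
  have e2: "2 * sqrt A / (c * sqrt (A / real n)) = 2 * t"
    using e1 by (simp add: mult.assoc[symmetric] times_divide_eq_left)
  have "card (Cells A (c * sqrt (A / real n))) = nat (\<lfloor>2 * t\<rfloor> + 1) * nat (\<lfloor>t\<rfloor> + 1)"
    by (simp add: Cells_def card_cartesian_product e1 e2)
  moreover have "real (nat (\<lfloor>2 * t\<rfloor> + 1)) \<le> 3 * t"
  proof -
    have "0 \<le> \<lfloor>2 * t\<rfloor> + 1" using t1 by simp
    then have "real (nat (\<lfloor>2 * t\<rfloor> + 1)) = real_of_int \<lfloor>2 * t\<rfloor> + 1" by simp
    also have "\<dots> \<le> 2 * t + 1" by simp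
    also have "\<dots> \<le> 3 * t" using t1 by simp
    finally show ?thesis .
  qed
  moreover have "real (nat (\<lfloor>t\<rfloor> + 1)) \<le> 2 * t"
  proof -
    have "0 \<le> \<lfloor>t\<rfloor> + 1" using t1 by simp
    then have "real (nat (\<lfloor>t\<rfloor> + 1)) = real_of_int \<lfloor>t\<rfloor> + 1" by simp
    also have "\<dots> \<le> t + 1" by simp
    also have "\<dots> \<le> 2 * t" using t1 by simp
    finally show ?thesis .
  qed
  ultimately have "real (card (Cells A (c * sqrt (A / real n)))) \<le> (3 * t) * (2 * t)"
    by (simp only: of_nat_mult) (intro mult_mono, auto)
  also have "\<dots> = 6 * real n / c^2"
    using n0 by (simp add: t_def power2_eq_square field_simps)
  finally show ?thesis .
qed

lemma K_bound:
  assumes n: "n \<ge> 2"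
  shows "real (nat \<lfloor>ln (real n)\<rfloor> - 1) \<ge> ln (real n) - 2"
proof -
  have ln0: "ln (real n) > 0" using n by simp
  have "real (nat \<lfloor>ln (real n)\<rfloor> - 1) \<ge> real (nat \<lfloor>ln (real n)\<rfloor>) - 1" by linarith
  moreover have "real (nat \<lfloor>ln (real n)\<rfloor>) = real_of_int \<lfloor>ln (real n)\<rfloor>" using ln0 by simp
  moreover have "real_of_int \<lfloor>ln (real n)\<rfloor> \<ge> ln (real n) - 1" by linarith
  ultimately show ?thesis by linarith
qed

lemma bound_main:
  assumes A: "A > 0" and c: "0 < c" "c < 1 / (7 * sqrt (exp 1))" and n: "n \<ge> 2"
  defines "K \<equiv> nat \<lfloor>ln (real n)\<rfloor> - 1" and "s \<equiv> c * sqrt (A / real n)"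
  shows "real (2*n)^(K+1) * real (card (Cells A s)) * 9^K * (s^2 / (2*A))^(K+1) \<le> 6 * exp 4 / real n"
proof -
  have n0: "real n > 0" using n by simp
  have e0: "exp 1 > (0::real)" by simp
  have c1: "c < 1"
  proof -
    have "1 \<le> sqrt (exp 1::real)" by simp
    then have "1 \<le> 7 * sqrt (exp 1::real)" by linarith
    then have le: "1 / (7 * sqrt (exp 1)) \<le> (1::real)" by (simp add: divide_le_eq)
    show ?thesis using c(2) le by linarith
  qed
  have s2: "s^2 = c^2 * A / real n" unfolding s_def using A n0 by (simp add: power_mult_distrib)
  have q: "real (2*n) * (s^2 / (2*A)) = c^2" using s2 A n0 by (simp add: field_simps)
  have cq: "9 * c^2 \<le> exp (-2)"
  proof -
    have "c^2 < (1 / (7 * sqrt (exp 1)))^2" using c by (intro power_strict_mono) auto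
    also have "\<dots> = 1 / (49 * exp 1)" by (simp add: power_divide power_mult_distrib)
    finally have "9 * c^2 \<le> 9 / (49 * exp 1)" by simp
    also have "\<dots> \<le> exp (-2)"
    proof -
      have "9 * exp 1 \<le> (49::real)" using exp_le by simp
      then have "9 * (exp 1 * exp 1) \<le> 49 * (exp 1::real)" using e0 by (simp add: mult.assoc[symmetric] mult_right_mono)
      then have "9 / (49 * exp 1) \<le> 1 / (exp 1 * (exp 1::real))" using e0 by (simp add: field_simps)
      moreover have "exp (-2) = 1 / (exp 1 * (exp 1::real))" by (simp add: exp_minus exp_add[symmetric] inverse_eq_divide)
      ultimately show ?thesis by simp
    qed
    finally show ?thesis .
  qed
  have Kb: "real K \<ge> ln (real n) - 2" unfolding K_def by (rule K_bound[OF n])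
  have "exp (2 * ln (real n)) = exp (ln (real n)) * exp (ln (real n))" by (simp only: mult_2 exp_add)
  then have exp2ln: "exp (2 * ln (real n)) = real n * real n" using n0 by simp
  have pw: "(9 * c^2)^K \<le> exp 4 / (real n)^2"
  proof -
    have "(9 * c^2)^K \<le> exp (-2)^K" by (intro power_mono cq) simp
    also have "\<dots> = exp (-2 * real K)" by (simp add: exp_of_nat_mult[symmetric] mult.commute)
    also have "\<dots> \<le> exp (-2 * (ln (real n) - 2))" using Kb by simp
    also have "\<dots> = exp (4 - 2 * ln (real n))" by (simp add: algebra_simps)
    also have "\<dots> = exp 4 / exp (2 * ln (real n))" by (rule exp_diff)
    also have "\<dots> = exp 4 / (real n)^2" by (simp add: exp2ln power2_eq_square)
    finally show ?thesis .
  qed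
  have "real (2*n)^(K+1) * real (card (Cells A s)) * 9^K * (s^2 / (2*A))^(K+1)
        = real (card (Cells A s)) * 9^K * (real (2*n) * (s^2 / (2*A)))^(K+1)"
  proof -
    have gen: "\<And>x C y :: real. x^(K+1) * C * 9^K * y^(K+1) = C * 9^K * (x*y)^(K+1)"
      by (simp add: power_mult_distrib)
    show ?thesis by (rule gen)
  qed
  also have "\<dots> = real (card (Cells A s)) * 9^K * (c^2)^(K+1)" by (simp only: q)
  also have "\<dots> = real (card (Cells A s)) * c^2 * (9 * c^2)^K"
  proof -
    have gen: "\<And>C d :: real. C * 9^K * (d)^(K+1) = C * d * (9 * d)^K"
      by (simp add: power_mult_distrib)
    show ?thesis by (rule gen)
  qed
  also have "\<dots> \<le> (6 * real n / c^2) * c^2 * (exp 4 / (real n)^2)"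
    using card_Cells_bound[OF A c(1) c1, of n] n pw c
    by (intro mult_mono) (auto simp: s_def)
  also have "\<dots> = 6 * exp 4 / real n" using c n0 by (simp add: field_simps power2_eq_square)
  finally show ?thesis .
qed

lemma comp_sets:
  fixes N :: nat
  assumes "i < N" "X \<in> sets lborel"
  shows "{\<omega> \<in> space (PiM {..<N} (\<lambda>_. uniform_measure lborel (rect A))). \<omega> i \<in> X}
          \<in> sets (PiM {..<N} (\<lambda>_. uniform_measure lborel (rect A)))"
proof -
  let ?M = "PiM {..<N} (\<lambda>_. uniform_measure lborel (rect A))"
  have m: "(\<lambda>\<omega>. \<omega> i) \<in> measurable ?M (uniform_measure lborel (rect A))"
    using measurable_component_singleton[of i "{..<N}" "\<lambda>_. uniform_measure lborel (rect A)"] assms(1) by simp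
  have "X \<in> sets (uniform_measure lborel (rect A))" using assms(2) by simp
  from measurable_sets[OF m this] show ?thesis by (simp add: vimage_def Int_def conj_commute)
qed

lemma Gs_sets:
  fixes N :: nat
  shows "{\<omega> \<in> space (PiM {..<N} (\<lambda>_. uniform_measure lborel (rect A))). \<forall>i\<in>{..<N}. \<omega> i \<in> rect A}
     \<in> sets (PiM {..<N} (\<lambda>_. uniform_measure lborel (rect A)))"
  by (rule sets.sets_Collect_finite_All) (auto intro!: comp_sets simp: rect_def)

lemma measure_U_rect:
  assumes "A > 0" shows "measure (uniform_measure lborel (rect A)) (rect A) = 1"
proof -
  have rs: "rect A \<in> sets lborel" by (simp add: rect_def)
  have "measure (uniform_measure lborel (rect A)) (rect A) = measure lborel (rect A \<inter> rect A) / measure lborel (rect A)"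
    by (rule measure_uniform_measure) (use assms rs in \<open>simp_all add: emeasure_rect\<close>)
  also have "\<dots> = 1" using assms by (simp add: measure_rect)
  finally show ?thesis .
qed

lemma Gs_measure:
  fixes N :: nat
  assumes A: "A > 0" and N: "N \<ge> 1"
  shows "measure (PiM {..<N} (\<lambda>_. uniform_measure lborel (rect A)))
     {\<omega> \<in> space (PiM {..<N} (\<lambda>_. uniform_measure lborel (rect A))). \<forall>i\<in>{..<N}. \<omega> i \<in> rect A} = 1"
proof -
  have eq: "{..<N} = {0..N-1}" using N by auto
  have "measure (PiM {..<N} (\<lambda>_. uniform_measure lborel (rect A)))
     {\<omega> \<in> space (PiM {..<N} (\<lambda>_. uniform_measure lborel (rect A))). \<forall>j\<in>{0..N-1}. \<omega> (id j) \<in> rect A}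
     = (\<Prod>j\<in>{0..N-1}. measure (uniform_measure lborel (rect A)) (rect A))"
    by (rule E_prob[OF A]) (use N in \<open>auto simp: rect_def\<close>)
  also have "\<dots> = 1" using measure_U_rect[OF A] by simp
  finally show ?thesis by (simp add: eq)
qed

theorem lemma2:
  fixes A c :: real
  assumes "A > 0" and "0 < c" and "c < 1 / (7 * sqrt (exp 1))"
  shows "\<exists>B. (\<forall>n. B n \<in> sets (node_space A n) \<and>
                 B n \<subseteq> {\<omega> \<in> space (node_space A n). good_config A c n \<omega>}) \<and>
             (\<lambda>n. measure (node_space A n) (B n)) \<longlonglongrightarrow> 1"
proof -
  have A: "A > 0" and c: "0 < c" "c < 1 / (7 * sqrt (exp 1))" using assms by auto
  have c1: "c < 1"
  proof -
    have "1 \<le> sqrt (exp 1::real)" by simp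
    then have "1 \<le> 7 * sqrt (exp 1::real)" by linarith
    then have le: "1 / (7 * sqrt (exp 1)) \<le> (1::real)" by (simp add: divide_le_eq)
    show ?thesis using c(2) le by linarith
  qed
  define K where "K n = nat \<lfloor>ln (real n)\<rfloor> - 1" for n :: nat
  define s where "s n = c * sqrt (A / real n)" for n :: nat
  define Gs where "Gs n = {\<omega> \<in> space (node_space A n). \<forall>i\<in>{..<2*n}. \<omega> i \<in> rect A}" for n
  define B where "B n = (if 2 \<le> n then Gs n - Bad A (2*n) (K n) (s n) else {})" for n
  have NS: "node_space A n = PiM {..<2*n} (\<lambda>_. uniform_measure lborel (rect A))" for n
    by (simp add: node_space_def)
  have sets: "B n \<in> sets (node_space A n)" for n
    unfolding B_def Gs_def NS using Gs_sets Bad_sets by (auto intro!: sets.Diff)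
  have sub: "B n \<subseteq> {\<omega> \<in> space (node_space A n). good_config A c n \<omega>}" for n
  proof
    fix \<omega> assume w: "\<omega> \<in> B n"
    then have n: "2 \<le> n" by (simp add: B_def split: if_splits)
    then have w': "\<omega> \<in> Gs n" "\<omega> \<notin> Bad A (2*n) (K n) (s n)" using w by (auto simp: B_def)
    then have sp: "\<omega> \<in> space (node_space A n)" and inr: "\<forall>i<2*n. \<omega> i \<in> rect A"
      by (auto simp: Gs_def)
    have "good_config A c n \<omega>"
      by (rule good_of_not_Bad[OF A c(1) c1 n sp inr]) (use w'(2) in \<open>simp add: K_def s_def\<close>)
    with sp show "\<omega> \<in> {\<omega> \<in> space (node_space A n). good_config A c n \<omega>}" by simp
  qed
  have prob: "prob_space (node_space A n)" for n
    unfolding NS by (rule prob_space_PiM) (rule prob_U[OF A])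
  have lower: "1 - 6 * exp 4 / real n \<le> measure (node_space A n) (B n)" if n: "n \<ge> 2" for n
  proof -
    let ?M = "node_space A n"
    have GS: "Gs n \<in> sets ?M" unfolding Gs_def NS by (rule Gs_sets)
    have BS: "Bad A (2*n) (K n) (s n) \<in> sets ?M" unfolding NS by (rule Bad_sets)
    have G1: "measure ?M (Gs n) = 1" unfolding Gs_def NS by (rule Gs_measure[OF A]) (use n in simp)
    have s0: "s n > 0" using A c n by (simp add: s_def)
    have "measure ?M (Bad A (2*n) (K n) (s n))
          \<le> real (2*n)^(K n+1) * real (card (Cells A (s n))) * 9^(K n) * ((s n)^2 / (2*A))^(K n+1)"
      unfolding NS by (rule Bad_measure[OF A s0])
    also have "\<dots> \<le> 6 * exp 4 / real n"
      unfolding K_def s_def by (rule bound_main[OF A c n])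
    finally have bad: "measure ?M (Bad A (2*n) (K n) (s n)) \<le> 6 * exp 4 / real n" .
    have "measure ?M (Gs n) \<le> measure ?M ((Gs n - Bad A (2*n) (K n) (s n)) \<union> Bad A (2*n) (K n) (s n))"
      by (rule finite_measure.finite_measure_mono[OF prob_space.finite_measure[OF prob]]) (use GS BS in auto)
    also have "\<dots> \<le> measure ?M (Gs n - Bad A (2*n) (K n) (s n)) + measure ?M (Bad A (2*n) (K n) (s n))"
      by (rule measure_Un_le) (use GS BS in auto)
    finally show ?thesis using G1 bad n by (simp add: B_def)
  qed
  have upper: "measure (node_space A n) (B n) \<le> 1" for n
    using prob_space.prob_le_1[OF prob] by simp
  have lim0: "(\<lambda>n. 1 - 6 * exp 4 / real n) \<longlonglongrightarrow> 1"
    using tendsto_diff[OF tendsto_const lim_const_over_n[of "6 * exp 4"], of 1] by simp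
  have "(\<lambda>n. measure (node_space A n) (B n)) \<longlonglongrightarrow> 1"
  proof (rule tendsto_sandwich[OF _ _ lim0 tendsto_const])
    show "\<forall>\<^sub>F n in sequentially. 1 - 6 * exp 4 / real n \<le> measure (node_space A n) (B n)"
      using lower by (intro eventually_sequentiallyI[of 2]) auto
    show "\<forall>\<^sub>F n in sequentially. measure (node_space A n) (B n) \<le> 1"
      using upper by simp
  qed
  then show ?thesis using sets sub by blast
qed

end
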